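(* Let $X,Y$ be metric vector spaces over $K$ with metrics $d_X,d_Y$, where $d_Y$ is translation invariant, and let $F:X\to Y$ be a linear mapping. (a) If $F\in B_d(X,Y)$, then $F$ is continuous. Conversely, suppose $F$ is continuous, $d_X$ is translation invariant and scale bounded on $X$ with constants $C_\alpha=M(\alpha)|\alpha|$ where $M$ is a positive bounded function on $K$, and $Y$ is a normed space whose metric $d_Y$ is the one induced by its norm. Then $F\in B_d(X,Y)$. (b) If $d_X$ is translation invariant and $F$ is continuous at a single point, then $F$ is continuous.
   Context: $K$ is $\mathbb{R}$ or $\mathbb{C}$. For maps $F_1,F_2:X\to Y$, $d(F_1,F_2)=\max\left\{\sup_{x\neq0,x\in X}\frac{d_Y[F_1(x),F_2(x)]}{d_X(x,0)},\ d_Y[F_1(0),F_2(0)]\right\}$, and $B_d(X,Y)$ is the set of maps $F:X\to Y$ with $d(F,0)<\infty$. A translation invariant metric $d_X$ is scale bounded on $X$ if for every $\alpha\in K$ there is a positive number $C_\alpha$ with $d_X(\alpha s,0)\le C_\alpha d_X(s,0)$ for all $s\in X$. *)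

theory Defs
  imports Complex_Main "HOL-Library.Extended_Real"
begin

text \<open>The scalar field K: a normed field which is (a copy of) the reals or the complex numbers.\<close>
class real_or_complex = real_normed_field +
  assumes real_or_complex:
    "(\<forall>x. \<exists>a. x = a *\<^sub>R 1) \<or>
     (\<exists>i. i * i = -1 \<and> (\<forall>x. \<exists>a b. x = a *\<^sub>R 1 + b *\<^sub>R i))"

instance real :: real_or_complex
  by standard auto

instance complex :: real_or_complex
proof
  show "(\<forall>x::complex. \<exists>a. x = a *\<^sub>R 1) \<or>
     (\<exists>i::complex. i * i = -1 \<and> (\<forall>x. \<exists>a b. x = a *\<^sub>R 1 + b *\<^sub>R i))"
  proof (rule disjI2, rule exI[of _ "\<i>"], intro conjI allI)
    fix x :: complex
    show "\<exists>a b. x = a *\<^sub>R 1 + b *\<^sub>R \<i>"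
      by (rule exI[of _ "Re x"], rule exI[of _ "Im x"]) (simp add: complex_eq_iff)
  qed simp
qed

definition metric_on :: "('a \<Rightarrow> 'a \<Rightarrow> real) \<Rightarrow> bool" where
  "metric_on d \<longleftrightarrow> (\<forall>x y. 0 \<le> d x y) \<and> (\<forall>x y. d x y = 0 \<longleftrightarrow> x = y) \<and>
     (\<forall>x y. d x y = d y x) \<and> (\<forall>x y z. d x z \<le> d x y + d y z)"

definition metric_vector_space ::
  "('k::real_normed_field \<Rightarrow> 'a::ab_group_add \<Rightarrow> 'a) \<Rightarrow> ('a \<Rightarrow> 'a \<Rightarrow> real) \<Rightarrow> bool" where
  "metric_vector_space s d \<longleftrightarrow> vector_space s \<and> metric_on d \<and>
     (\<forall>x y e. e > 0 \<longrightarrow> (\<exists>\<delta>>0. \<forall>x' y'. d x' x < \<delta> \<and> d y' y < \<delta> \<longrightarrow> d (x' + y') (x + y) < e)) \<and>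
     (\<forall>a x e. e > 0 \<longrightarrow> (\<exists>\<delta>>0. \<forall>a' x'. norm (a' - a) < \<delta> \<and> d x' x < \<delta> \<longrightarrow> d (s a' x') (s a x) < e))"

definition translation_invariant :: "('a::ab_group_add \<Rightarrow> 'a \<Rightarrow> real) \<Rightarrow> bool" where
  "translation_invariant d \<longleftrightarrow> (\<forall>x y z. d (x + z) (y + z) = d x y)"

definition scale_bounded :: "('k \<Rightarrow> 'a::zero \<Rightarrow> 'a) \<Rightarrow> ('a \<Rightarrow> 'a \<Rightarrow> real) \<Rightarrow> bool" where
  "scale_bounded s d \<longleftrightarrow> (\<forall>\<alpha>. \<exists>C>0. \<forall>x. d (s \<alpha> x) 0 \<le> C * d x 0)"

definition mcont_at :: "('a \<Rightarrow> 'a \<Rightarrow> real) \<Rightarrow> ('b \<Rightarrow> 'b \<Rightarrow> real) \<Rightarrow> ('a \<Rightarrow> 'b) \<Rightarrow> 'a \<Rightarrow> bool" where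
  "mcont_at dX dY f x \<longleftrightarrow> (\<forall>e>0. \<exists>\<delta>>0. \<forall>y. dX y x < \<delta> \<longrightarrow> dY (f y) (f x) < e)"

definition mcont :: "('a \<Rightarrow> 'a \<Rightarrow> real) \<Rightarrow> ('b \<Rightarrow> 'b \<Rightarrow> real) \<Rightarrow> ('a \<Rightarrow> 'b) \<Rightarrow> bool" where
  "mcont dX dY f \<longleftrightarrow> (\<forall>x. mcont_at dX dY f x)"

definition map_dist ::
  "('a::zero \<Rightarrow> 'a \<Rightarrow> real) \<Rightarrow> ('b \<Rightarrow> 'b \<Rightarrow> real) \<Rightarrow> ('a \<Rightarrow> 'b) \<Rightarrow> ('a \<Rightarrow> 'b) \<Rightarrow> ereal" where
  "map_dist dX dY F1 F2 =
     max (SUP x\<in>{x. x \<noteq> 0}. ereal (dY (F1 x) (F2 x) / dX x 0)) (ereal (dY (F1 0) (F2 0)))"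

definition Bd :: "('a::zero \<Rightarrow> 'a \<Rightarrow> real) \<Rightarrow> ('b::zero \<Rightarrow> 'b \<Rightarrow> real) \<Rightarrow> ('a \<Rightarrow> 'b) set" where
  "Bd dX dY = {F. map_dist dX dY F (\<lambda>_. 0) < \<infinity>}"

definition norm_on :: "('k::real_normed_field \<Rightarrow> 'b::ab_group_add \<Rightarrow> 'b) \<Rightarrow> ('b \<Rightarrow> real) \<Rightarrow> bool" where
  "norm_on s n \<longleftrightarrow> (\<forall>y. 0 \<le> n y) \<and> (\<forall>y. n y = 0 \<longleftrightarrow> y = 0) \<and>
     (\<forall>y z. n (y + z) \<le> n y + n z) \<and> (\<forall>a y. n (s a y) = norm a * n y)"

end

theory Submission
  imports Defs
begin

lemma metric_pos:
  assumes "metric_on d" "x \<noteq> 0"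
  shows "d x 0 > 0"
  using assms unfolding metric_on_def by (metis order_le_less)

theorem theorem9:
  fixes sX :: "'k::real_or_complex \<Rightarrow> 'a::ab_group_add \<Rightarrow> 'a"
    and sY :: "'k \<Rightarrow> 'b::ab_group_add \<Rightarrow> 'b"
    and dX :: "'a \<Rightarrow> 'a \<Rightarrow> real" and dY :: "'b \<Rightarrow> 'b \<Rightarrow> real"
    and F :: "'a \<Rightarrow> 'b"
  assumes "metric_vector_space sX dX" and "metric_vector_space sY dY"
    and "translation_invariant dY"
    and "Vector_Spaces.linear sX sY F"
  shows "(F \<in> Bd dX dY \<longrightarrow> mcont dX dY F)
    \<and> ((mcont dX dY F \<and> translation_invariant dX \<and> scale_bounded sX dX
         \<and> (\<exists>M::'k \<Rightarrow> real. (\<forall>\<alpha>. 0 < M \<alpha>) \<and> (\<exists>B. \<forall>\<alpha>. M \<alpha> \<le> B)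
              \<and> (\<forall>\<alpha> x. dX (sX \<alpha> x) 0 \<le> M \<alpha> * norm \<alpha> * dX x 0))
         \<and> (\<exists>nY. norm_on sY nY \<and> (\<forall>y z. dY y z = nY (y - z))))
       \<longrightarrow> F \<in> Bd dX dY)
    \<and> ((translation_invariant dX \<and> (\<exists>x0. mcont_at dX dY F x0)) \<longrightarrow> mcont dX dY F)"
proof -
  interpret L: Vector_Spaces.linear sX sY F by fact
  have mX: "metric_on dX" and mY: "metric_on dY"
    using assms(1,2) unfolding metric_vector_space_def by auto
  have addX: "\<And>x y e. e > 0 \<Longrightarrow> (\<exists>\<delta>>0. \<forall>x' y'. dX x' x < \<delta> \<and> dX y' y < \<delta> \<longrightarrow> dX (x' + y') (x + y) < e)"
    using assms(1) unfolding metric_vector_space_def by auto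
  have tY: "\<And>a b. dY a b = dY (a - b) 0"
  proof -
    fix a b
    have "dY (a - b + b) (0 + b) = dY (a - b) 0"
      using assms(3) unfolding translation_invariant_def by blast
    then show "dY a b = dY (a - b) 0" by simp
  qed
  have d0: "\<And>x. dX x x = 0" "\<And>y. dY y y = 0" using mX mY unfolding metric_on_def by auto
  have P1: "F \<in> Bd dX dY \<Longrightarrow> mcont dX dY F"
  proof -
    assume "F \<in> Bd dX dY"
    then have "map_dist dX dY F (\<lambda>_. 0) \<noteq> \<infinity>" unfolding Bd_def by auto
    then obtain n :: nat where n: "map_dist dX dY F (\<lambda>_. 0) < ereal (real n)"
      using less_PInf_Ex_of_nat by blast
    have bnd: "dY (F x) 0 \<le> real n * dX x 0" for x
    proof (cases "x = 0")
      case True then show ?thesis using d0 L.zero by simp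
    next
      case False
      have pos: "dX x 0 > 0" using metric_pos[OF mX False] .
      have "ereal (dY (F x) 0 / dX x 0) \<le> (SUP x\<in>{x. x \<noteq> 0}. ereal (dY (F x) 0 / dX x 0))"
        using False by (intro SUP_upper) auto
      also have "\<dots> \<le> map_dist dX dY F (\<lambda>_. 0)" unfolding map_dist_def by simp
      finally have "ereal (dY (F x) 0 / dX x 0) < ereal (real n)" using n by (rule le_less_trans)
      then have "dY (F x) 0 / dX x 0 < real n" by simp
      then show ?thesis using pos by (simp add: divide_less_eq)
    qed
    show "mcont dX dY F" unfolding mcont_def mcont_at_def
    proof (intro allI impI)
      fix x and e :: real assume e: "e > 0"
      have e': "e / (real n + 1) > 0" using e by simp
      obtain \<delta> where dp: "\<delta> > 0" and dl: "\<And>x' y'. dX x' x < \<delta> \<and> dX y' (-x) < \<delta> \<longrightarrow> dX (x' + y') (x + - x) < e / (real n + 1)"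
        using addX[OF e', of x "-x"] by blast
      show "\<exists>\<delta>>0. \<forall>y. dX y x < \<delta> \<longrightarrow> dY (F y) (F x) < e"
      proof (intro exI[of _ \<delta>] conjI allI impI dp)
        fix y assume "dX y x < \<delta>"
        then have a: "dX (y - x) 0 < e / (real n + 1)" using dl[of y "-x"] dp d0 by simp
        have "dY (F y) (F x) = dY (F (y - x)) 0" using tY L.diff by simp
        also have "\<dots> \<le> real n * dX (y - x) 0" by (rule bnd)
        also have "\<dots> \<le> real n * (e / (real n + 1))" using a by (intro mult_left_mono) auto
        also have "\<dots> < e" using e by (simp add: field_simps)
        finally show "dY (F y) (F x) < e" .
      qed
    qed
  qed
  have P2: "F \<in> Bd dX dY" if c: "mcont dX dY F"
    and M: "\<exists>M::'k \<Rightarrow> real. (\<forall>\<alpha>. 0 < M \<alpha>) \<and> (\<exists>B. \<forall>\<alpha>. M \<alpha> \<le> B)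
              \<and> (\<forall>\<alpha> x. dX (sX \<alpha> x) 0 \<le> M \<alpha> * norm \<alpha> * dX x 0)"
    and N: "\<exists>nY. norm_on sY nY \<and> (\<forall>y z. dY y z = nY (y - z))"
  proof -
    obtain M B where Mp: "\<And>\<alpha>. 0 < M \<alpha>" and MB: "\<And>\<alpha>. M \<alpha> \<le> B"
      and Ms: "\<And>\<alpha> x. dX (sX \<alpha> x) 0 \<le> M \<alpha> * norm \<alpha> * dX x 0" using M by blast
    obtain nY where nn: "norm_on sY nY" and dn: "\<And>y z. dY y z = nY (y - z)" using N by blast
    have Bp: "B > 0" using Mp[of 0] MB[of 0] by simp
    have nsc: "\<And>a y. nY (sY a y) = norm a * nY y" and nnn: "\<And>y. nY y \<ge> 0" using nn unfolding norm_on_def by auto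
    obtain \<delta> where dp: "\<delta> > 0" and dl: "\<And>y. dX y 0 < \<delta> \<Longrightarrow> dY (F y) (F 0) < 1"
      using c unfolding mcont_def mcont_at_def by (meson zero_less_one)
    have bnd: "dY (F x) 0 / dX x 0 \<le> 2 * B / \<delta>" if x: "x \<noteq> 0" for x
    proof -
      define t where "t = dX x 0"
      have tp: "t > 0" using metric_pos[OF mX x] t_def by simp
      define r where "r = \<delta> / (2 * B * t)"
      have rp: "r > 0" using dp Bp tp r_def by simp
      have "dX (sX (of_real r) x) 0 \<le> M (of_real r) * norm (of_real r :: 'k) * t"
        using Ms[of "of_real r" x] t_def by simp
      also have "\<dots> \<le> B * r * t" using MB[of "of_real r"] rp tp by (simp add: mult_right_mono)
      also have "\<dots> = \<delta> / 2" using r_def Bp tp by (simp add: field_simps)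
      also have "\<dots> < \<delta>" using dp by simp
      finally have "dY (F (sX (of_real r) x)) (F 0) < 1" by (rule dl)
      then have "r * nY (F x) < 1" using dn L.scale L.zero nsc rp by simp
      then have "nY (F x) < 1 / r" using rp by (simp add: field_simps)
      also have "1 / r = 2 * B * t / \<delta>" using r_def by simp
      finally have "nY (F x) / t \<le> 2 * B / \<delta>" using tp by (simp add: field_simps)
      then show ?thesis using dn t_def by simp
    qed
    have "(SUP x\<in>{x. x \<noteq> 0}. ereal (dY (F x) 0 / dX x 0)) \<le> ereal (2 * B / \<delta>)"
      using bnd by (intro SUP_least) auto
    moreover have "ereal (dY (F 0) 0) \<le> ereal (2 * B / \<delta>)"
      using d0 L.zero Bp dp by simp
    ultimately have "map_dist dX dY F (\<lambda>_. 0) \<le> ereal (2 * B / \<delta>)"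
      unfolding map_dist_def by (rule max.boundedI)
    moreover have "ereal (2 * B / \<delta>) < \<infinity>" by simp
    ultimately have "map_dist dX dY F (\<lambda>_. 0) < \<infinity>" by (rule le_less_trans)
    then show ?thesis unfolding Bd_def by simp
  qed
  have P3: "mcont dX dY F" if tX: "translation_invariant dX" and c: "mcont_at dX dY F x0" for x0
    unfolding mcont_def mcont_at_def
  proof (intro allI impI)
    fix x and e :: real assume e: "e > 0"
    obtain \<delta> where dp: "\<delta> > 0" and dl: "\<And>y. dX y x0 < \<delta> \<Longrightarrow> dY (F y) (F x0) < e"
      using c e unfolding mcont_at_def by blast
    show "\<exists>\<delta>>0. \<forall>y. dX y x < \<delta> \<longrightarrow> dY (F y) (F x) < e"
    proof (intro exI[of _ \<delta>] conjI allI impI dp)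
      fix y assume y: "dX y x < \<delta>"
      have "dX (y + (x0 - x)) (x + (x0 - x)) = dX y x" using tX unfolding translation_invariant_def by blast
      then have "dX (y - x + x0) x0 < \<delta>" using y by (simp add: algebra_simps)
      then have "dY (F (y - x + x0)) (F x0) < e" by (rule dl)
      moreover have "dY (F (y - x + x0)) (F x0) = dY (F y) (F x)"
      proof -
        have "F (y - x + x0) - F x0 = F y - F x" by (simp add: L.add L.diff)
        then show ?thesis using tY[of "F (y - x + x0)" "F x0"] tY[of "F y" "F x"] by simp
      qed
      ultimately show "dY (F y) (F x) < e" by simp
    qed
  qed
  show ?thesis using P1 P2 P3 by blast
qed

end
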